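(* In the setting of the context, fix $\beta>0$ and let $N\ge1$ be an integer such that $\|k-g\|<\beta\|k\|$, where $g:=\sum_{n=1}^Nk_n\phi_n$, $\phi_n(x)=\sqrt2\sin(n\pi x)$, $k_n:=\int_0^1k(y)\phi_n(y)dy$ (such $N$ exists). Let $\lambda_n:=n^2\pi^2\theta-\lambda$, $F_N:=\sum_{n=1}^N|k_n\phi_n'(1)|$, $G_N:=\sum_{n=1}^N|k_n\lambda_n|$, $p:=-2\theta\pi^2+2\lambda+\tfrac13\lambda^2$, and $$a_0:=\beta\|k\|-\|k-g\|,\quad a_1:=\theta\|k\|F_N+\tfrac{\sqrt3}{3}G_N\|k\|,\quad a_2:=G_N\Big(1+\tfrac{\sqrt3}{3}\|k\|+\tfrac{\|k\|}{\sqrt p}\Big).$$ Then for every $u_0\in L^2(0,1)$ and every $j\ge0$ with $t_{j+1}<\infty$, $$t_{j+1}-t_j\ge\tau:=\frac2p\,W\!\Big(\frac{p\,a_0}{2(a_1+a_2)}\Big)>0,$$ where $W$ is the principal branch of the Lambert W function (the inverse of $s\mapsto se^s$ on $[0,\infty)$).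
   Context: Standing setting. Fix $\theta>0$, $\lambda\in\mathbb{R}$ with $\lambda\ge\theta\pi^2$, and a design parameter $c\ge0$; set $\kappa:=(\lambda+c)/\theta>0$. Define the kernel on $\{0\le y\le x\le1\}$ by $K(x,y)=-y\kappa\,\frac{I_1(\sqrt{\kappa(x^2-y^2)})}{\sqrt{\kappa(x^2-y^2)}}$ (extended continuously to $y=x$ by the value $-y\kappa/2$), where $I_1$ is the modified Bessel function of the first kind of order 1, and let $k(y):=K(1,y)$, $y\in[0,1]$. $\|\cdot\|$ is the $L^2(0,1)$ norm and $u[t]$ denotes $x\mapsto u(t,x)$. The closed-loop system is $u_t=\theta u_{xx}+\lambda u$ on $(0,1)$, $u(t,0)=0$, $u(t,1)=U_d(t)$, $u[0]=u_0\in L^2(0,1)$, under the event-triggered boundary control with parameter $\beta>0$ defined as follows. Set $t_0=0$. Given an event time $t_j$ and $u[t_j]$, let $u$ on $[t_j,\infty)$ be the (unique) solution with held boundary value $U_d(t)=\int_0^1k(y)u(t_j,y)\,dy$, where solution means: $t\mapsto u[t]$ continuous into $L^2(0,1)$ on $[t_j,\infty)$, $u\in C^1$ on $(t_j,\infty)\times[0,1]$, $u[t]\in C^2([0,1])$ for $t>t_j$, PDE and boundary conditions holding pointwise. Let $d(t):=\int_0^1k(y)\big(u(t_j,y)-u(t,y)\big)dy$ and $S_j:=\{t>t_j:\ |d(t)|>\beta\|k\|\,\|u[t]\|+\beta\|k\|\,\|u[t_j]\|\}$. If $S_j=\emptyset$ there are no further events ($t_{j+1}:=+\infty$); otherwise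 $t_{j+1}:=\inf S_j$, the control is $U_d(t)=\int_0^1k(y)u(t_j,y)dy$ for $t\in[t_j,t_{j+1})$, and the construction is repeated from $t_{j+1}$. *)

theory Defs
  imports "HOL-Analysis.Analysis"
begin

definition besselI1 :: "real \<Rightarrow> real" where
  "besselI1 z = (\<Sum>m. (z / 2) ^ (2 * m + 1) / (fact m * fact (m + 1)))"

text \<open>Backstepping kernel K(x,y) with parameter kappa, continuously extended at y = x.\<close>
definition kernelK :: "real \<Rightarrow> real \<Rightarrow> real \<Rightarrow> real" where
  "kernelK kappa x y =
     (if y = x then - y * kappa / 2
      else - y * kappa * besselI1 (sqrt (kappa * (x\<^sup>2 - y\<^sup>2))) / sqrt (kappa * (x\<^sup>2 - y\<^sup>2)))"

definition gain_k :: "real \<Rightarrow> real \<Rightarrow> real \<Rightarrow> real \<Rightarrow> real" where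
  "gain_k theta lam c y = kernelK ((lam + c) / theta) 1 y"

definition L2 :: "(real \<Rightarrow> real) \<Rightarrow> bool" where
  "L2 f \<longleftrightarrow> f \<in> borel_measurable (lebesgue_on {0..1})
           \<and> integrable (lebesgue_on {0..1}) (\<lambda>x. (f x)\<^sup>2)"

definition L2norm :: "(real \<Rightarrow> real) \<Rightarrow> real" where
  "L2norm f = sqrt (integral\<^sup>L (lebesgue_on {0..1}) (\<lambda>x. (f x)\<^sup>2))"

definition ip01 :: "(real \<Rightarrow> real) \<Rightarrow> (real \<Rightarrow> real) \<Rightarrow> real" where
  "ip01 f g = integral\<^sup>L (lebesgue_on {0..1}) (\<lambda>x. f x * g x)"

definition heat_solution ::
  "real \<Rightarrow> real \<Rightarrow> real \<Rightarrow> real \<Rightarrow> (real \<Rightarrow> real \<Rightarrow> real) \<Rightarrow> bool" where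
  "heat_solution theta lam t0 U w \<longleftrightarrow>
     (\<forall>t\<ge>t0. L2 (w t)) \<and>
     (\<forall>s\<ge>t0. ((\<lambda>t. L2norm (\<lambda>x. w t x - w s x)) \<longlongrightarrow> 0) (at s within {t0..})) \<and>
     (\<exists>wt wx wxx :: real \<Rightarrow> real \<Rightarrow> real.
        continuous_on ({t0<..} \<times> {0..1}) (\<lambda>(t, x). wt t x) \<and>
        continuous_on ({t0<..} \<times> {0..1}) (\<lambda>(t, x). wx t x) \<and>
        (\<forall>t>t0. \<forall>x\<in>{0..1}. ((\<lambda>s. w s x) has_real_derivative wt t x) (at t)) \<and>
        (\<forall>t>t0. \<forall>x\<in>{0..1}. ((\<lambda>y. w t y) has_real_derivative wx t x) (at x within {0..1})) \<and>
        (\<forall>t>t0. \<forall>x\<in>{0..1}. ((\<lambda>y. wx t y) has_real_derivative wxx t x) (at x within {0..1})) \<and>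
        (\<forall>t>t0. continuous_on {0..1} (wxx t)) \<and>
        (\<forall>t>t0. \<forall>x\<in>{0<..<1}. wt t x = theta * wxx t x + lam * w t x) \<and>
        (\<forall>t>t0. w t 0 = 0 \<and> w t 1 = U))"

text \<open>Event times ts j :: ereal
  (\<infinity> means no further event). On [t_j, t_{j+1}] the closed-loop state u coincides (on [0,1])
  with the held solution w started from u[t_j] with U = <k, u[t_j]>; t_{j+1} = inf S_j.\<close>
definition event_triggered ::
  "real \<Rightarrow> real \<Rightarrow> real \<Rightarrow> real \<Rightarrow> (real \<Rightarrow> real) \<Rightarrow> (real \<Rightarrow> real \<Rightarrow> real) \<Rightarrow> (nat \<Rightarrow> ereal) \<Rightarrow> bool"
  where
  "event_triggered theta lam c beta u0 u ts \<longleftrightarrow>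
     (\<forall>x\<in>{0..1}. u 0 x = u0 x) \<and> ts 0 = 0 \<and>
     (\<forall>j. ts j = \<infinity> \<longrightarrow> ts (Suc j) = \<infinity>) \<and>
     (\<forall>j. ts j \<noteq> \<infinity> \<longrightarrow>
        (\<exists>w. heat_solution theta lam (real_of_ereal (ts j))
                 (ip01 (gain_k theta lam c) (u (real_of_ereal (ts j)))) w \<and>
             (\<forall>x\<in>{0..1}. w (real_of_ereal (ts j)) x = u (real_of_ereal (ts j)) x) \<and>
             (let tj = real_of_ereal (ts j); k = gain_k theta lam c;
                  S = {t. tj < t \<and>
                        \<bar>ip01 k (\<lambda>y. w tj y - w t y)\<bar>
                          > beta * L2norm k * L2norm (w t) + beta * L2norm k * L2norm (w tj)}
              in (S = {} \<longrightarrow> ts (Suc j) = \<infinity>) \<and> (S \<noteq> {} \<longrightarrow> ts (Suc j) = ereal (Inf S))) \<and>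
             (\<forall>t. ts j \<le> ereal t \<and> ereal t \<le> ts (Suc j) \<longrightarrow> (\<forall>x\<in>{0..1}. u t x = w t x))))"

definition lambertW :: "real \<Rightarrow> real" where
  "lambertW x = (THE s. 0 \<le> s \<and> s * exp s = x)"

definition phi :: "nat \<Rightarrow> real \<Rightarrow> real" where
  "phi n x = sqrt 2 * sin (real n * pi * x)"

end

theory Submission
  imports Defs
begin


abbreviation "M01 \<equiv> lebesgue_on {0..1::real}"

lemma L2_prod_integrable:
  assumes "L2 f" "L2 g"
  shows "integrable M01 (\<lambda>x. f x * g x)"
proof (rule Bochner_Integration.integrable_bound)
  show "integrable M01 (\<lambda>x. (f x)\<^sup>2 + (g x)\<^sup>2)"
    using assms unfolding L2_def by auto
  show "(\<lambda>x. f x * g x) \<in> borel_measurable M01"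
    using assms unfolding L2_def by auto
  show "AE x in M01. norm (f x * g x) \<le> norm ((f x)\<^sup>2 + (g x)\<^sup>2)"
  proof (rule AE_I2)
    fix x
    have "0 \<le> (\<bar>f x\<bar> - \<bar>g x\<bar>)\<^sup>2" by simp
    hence "2*(\<bar>f x\<bar> * \<bar>g x\<bar>) \<le> (f x)\<^sup>2 + (g x)\<^sup>2"
      unfolding power2_diff by simp
    moreover have "0 \<le> \<bar>f x\<bar> * \<bar>g x\<bar>" by simp
    ultimately have "\<bar>f x\<bar> * \<bar>g x\<bar> \<le> (f x)\<^sup>2 + (g x)\<^sup>2" by linarith
    thus "norm (f x * g x) \<le> norm ((f x)\<^sup>2 + (g x)\<^sup>2)"
      by (simp add: abs_mult)
  qed
qed

lemma discr:
  fixes A B C :: real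
  assumes "\<And>t. 0 \<le> A + 2*t*B + t\<^sup>2*C" "C \<ge> 0"
  shows "B\<^sup>2 \<le> A * C"
proof (cases "C = 0")
  case True
  have "B = 0"
  proof (rule ccontr)
    assume "B \<noteq> 0"
    have "0 \<le> A + 2*(-(A+1)/(2*B))*B + (-(A+1)/(2*B))\<^sup>2*C" by (rule assms(1))
    with True \<open>B\<noteq>0\<close> show False by (simp add: field_simps)
  qed
  with True show ?thesis by simp
next
  case False
  hence C: "C > 0" using assms(2) by simp
  have "0 \<le> A + 2*(-B/C)*B + (-B/C)\<^sup>2*C" by (rule assms(1))
  hence "0 \<le> (A + 2*(-B/C)*B + (-B/C)\<^sup>2*C) * C" using C by simp
  also have "\<dots> = A*C - B\<^sup>2" using C by (simp add: field_simps power2_eq_square)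
  finally show ?thesis by simp
qed

lemma L2_CS:
  assumes f: "L2 f" and g: "L2 g"
  shows "\<bar>ip01 f g\<bar> \<le> L2norm f * L2norm g"
proof -
  define A where "A = integral\<^sup>L M01 (\<lambda>x. (f x)\<^sup>2)"
  define B where "B = integral\<^sup>L M01 (\<lambda>x. f x * g x)"
  define C where "C = integral\<^sup>L M01 (\<lambda>x. (g x)\<^sup>2)"
  have iA: "integrable M01 (\<lambda>x. (f x)\<^sup>2)" and iC: "integrable M01 (\<lambda>x. (g x)\<^sup>2)"
    using f g unfolding L2_def by auto
  have iB: "integrable M01 (\<lambda>x. f x * g x)" using L2_prod_integrable[OF f g] .
  have "0 \<le> A + 2*t*B + t\<^sup>2*C" for t
  proof -
    have "0 \<le> integral\<^sup>L M01 (\<lambda>x. (f x + t * g x)\<^sup>2)" by simp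
    also have "(\<lambda>x. (f x + t * g x)\<^sup>2) = (\<lambda>x. (f x)\<^sup>2 + (2*t) * (f x * g x) + t\<^sup>2 * (g x)\<^sup>2)"
      by (auto simp: power2_eq_square algebra_simps)
    also have "integral\<^sup>L M01 \<dots> = A + 2*t*B + t\<^sup>2*C"
      using iA iB iC unfolding A_def B_def C_def by simp
    finally show ?thesis .
  qed
  moreover have "C \<ge> 0" unfolding C_def by simp
  ultimately have "B\<^sup>2 \<le> A * C" by (rule discr)
  hence "\<bar>B\<bar> \<le> sqrt (A * C)" by (metis real_sqrt_abs real_sqrt_le_mono)
  thus ?thesis unfolding ip01_def L2norm_def A_def B_def C_def by (simp add: real_sqrt_mult)
qed

lemma L2_cont:
  assumes "continuous_on {0..1} f"
  shows "L2 f"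
  unfolding L2_def
proof
  show "f \<in> borel_measurable M01"
    by (rule continuous_imp_measurable_on_sets_lebesgue[OF assms]) auto
  show "integrable M01 (\<lambda>x. (f x)\<^sup>2)"
    by (rule continuous_imp_integrable_real) (intro continuous_intros assms)
qed

lemma L2_diff:
  assumes f: "L2 f" and g: "L2 g"
  shows "L2 (\<lambda>x. f x - g x)"
  unfolding L2_def
proof
  show "(\<lambda>x. f x - g x) \<in> borel_measurable M01" using f g unfolding L2_def by auto
  show "integrable M01 (\<lambda>x. (f x - g x)\<^sup>2)"
  proof (rule Bochner_Integration.integrable_bound)
    show "integrable M01 (\<lambda>x. 2*(f x)\<^sup>2 + 2*(g x)\<^sup>2)"
      using f g unfolding L2_def by auto
    show "(\<lambda>x. (f x - g x)\<^sup>2) \<in> borel_measurable M01"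
      using f g unfolding L2_def by auto
    show "AE x in M01. norm ((f x - g x)\<^sup>2) \<le> norm (2*(f x)\<^sup>2 + 2*(g x)\<^sup>2)"
    proof (rule AE_I2)
      fix x
      have "0 \<le> (f x + g x)\<^sup>2" by simp
      hence "(f x - g x)\<^sup>2 \<le> 2*(f x)\<^sup>2 + 2*(g x)\<^sup>2"
        by (simp add: power2_eq_square algebra_simps)
      thus "norm ((f x - g x)\<^sup>2) \<le> norm (2*(f x)\<^sup>2 + 2*(g x)\<^sup>2)" by simp
    qed
  qed
qed

lemma ip01_cont:
  assumes "continuous_on {0..1} f" "continuous_on {0..1} g"
  shows "ip01 f g = integral {0..1} (\<lambda>x. f x * g x)"
  unfolding ip01_def
  by (rule lebesgue_integral_eq_integral) (auto intro!: continuous_imp_integrable_real continuous_intros assms)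

lemma ip01_cong:
  assumes "\<And>x. x \<in> {0..1} \<Longrightarrow> f x = f' x" "\<And>x. x \<in> {0..1} \<Longrightarrow> g x = g' x"
  shows "ip01 f g = ip01 f' g'"
  unfolding ip01_def by (rule Bochner_Integration.integral_cong) (auto simp: assms)



definition Bs :: "real \<Rightarrow> real" where
  "Bs x = (\<Sum>n. inverse (fact n * fact (Suc n)) * x^n)"

lemma Bs_summable: "summable (\<lambda>n. inverse (fact n * fact (Suc n)) * (x::real)^n)"
proof (rule summable_comparison_test')
  show "summable (\<lambda>n. inverse (fact n) * \<bar>x\<bar>^n)" by (rule summable_exp)
  fix n :: nat
  have "inverse (fact n * fact (Suc n)) \<le> (inverse (fact n) :: real)"
  proof -
    have "(1::real) \<le> fact (Suc n)" by (rule fact_ge_1)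
    hence "fact n \<le> fact n * (fact (Suc n) :: real)" by simp
    thus ?thesis by (intro le_imp_inverse_le) auto
  qed
  thus "norm (inverse (fact n * fact (Suc n)) * x^n) \<le> inverse (fact n) * \<bar>x\<bar>^n"
    by (simp add: abs_mult power_abs mult_right_mono)
qed

lemma Bs_cont: "isCont Bs x"
  unfolding Bs_def[abs_def] by (rule isCont_powser_converges_everywhere) (rule Bs_summable)

lemma Bs_pos: "x \<ge> 0 \<Longrightarrow> Bs x > 0"
  unfolding Bs_def by (rule suminf_pos2[OF Bs_summable, where i=0]) auto

lemma Bs_0: "Bs 0 = 1"
  unfolding Bs_def by (subst powser_zero) simp

lemma besselI1_Bs: "besselI1 z = z/2 * Bs (z\<^sup>2/4)"
proof -
  have "(\<lambda>m. (z / 2) ^ (2 * m + 1) / (fact m * fact (m + 1))) =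
        (\<lambda>m. z/2 * (inverse (fact m * fact (Suc m)) * (z\<^sup>2/4)^m))"
  proof
    fix m :: nat
    have "(z / 2) ^ (2 * m + 1) = z/2 * (z/2)^(2*m)"
      by (simp only: power_add power_one_right mult.commute)
    also have "(z/2)^(2*m) = ((z/2)^2)^m" by (rule power_mult)
    also have "(z/2)^2 = z\<^sup>2/4" by (simp add: power_divide)
    finally have e: "(z / 2) ^ (2 * m + 1) = z/2 * (z\<^sup>2/4)^m" .
    have "(z / 2) ^ (2 * m + 1) / (fact m * fact (m + 1)) = z/2 * (z\<^sup>2/4)^m / (fact m * fact (Suc m))"
      by (simp only: e Suc_eq_plus1)
    also have "\<dots> = z/2 * (inverse (fact m * fact (Suc m)) * (z\<^sup>2/4)^m)"
      by (simp only: divide_inverse mult_ac)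
    finally show "(z / 2) ^ (2 * m + 1) / (fact m * fact (m + 1)) =
        z/2 * (inverse (fact m * fact (Suc m)) * (z\<^sup>2/4)^m)" .
  qed
  hence "besselI1 z = (\<Sum>m. z/2 * (inverse (fact m * fact (Suc m)) * (z\<^sup>2/4)^m))"
    unfolding besselI1_def by simp
  also have "\<dots> = z/2 * Bs (z\<^sup>2/4)" unfolding Bs_def by (rule suminf_mult[OF Bs_summable])
  finally show ?thesis .
qed

lemma kernelK_Bs:
  assumes "kappa > 0" "y \<in> {0..1}"
  shows "kernelK kappa 1 y = -(y*kappa/2) * Bs (kappa*(1-y\<^sup>2)/4)"
proof (cases "y = 1")
  case True thus ?thesis by (simp add: kernelK_def Bs_0)
next
  case False
  with assms have y: "0 \<le> y" "y < 1" by auto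
  hence "y\<^sup>2 < 1\<^sup>2" by (intro power_strict_mono) auto
  hence "y\<^sup>2 < 1" by simp
  hence pos: "kappa * (1 - y\<^sup>2) > 0" using assms by simp
  define z where "z = sqrt (kappa * (1\<^sup>2 - y\<^sup>2))"
  have z: "z > 0" "z\<^sup>2 = kappa*(1-y\<^sup>2)" using pos by (auto simp: z_def)
  have "kernelK kappa 1 y = - y * kappa * besselI1 z / z"
    using False by (simp add: kernelK_def z_def)
  also have "\<dots> = - y * kappa * (z/2 * Bs (z\<^sup>2/4)) / z"
    by (simp add: besselI1_Bs)
  also have "\<dots> = -(y*kappa/2) * Bs (z\<^sup>2/4)"
    using z(1) by (simp add: field_simps)
  also have "\<dots> = -(y*kappa/2) * Bs (kappa*(1-y\<^sup>2)/4)"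
    by (simp only: z(2))
  finally show ?thesis .
qed


definition dphi :: "nat \<Rightarrow> real \<Rightarrow> real" where
  "dphi n x = sqrt 2 * (real n * pi) * cos (real n * pi * x)"

lemma phi_deriv: "(phi n has_real_derivative dphi n x) (at x within S)"
  unfolding phi_def[abs_def] dphi_def
  by (auto intro!: derivative_eq_intros)

lemma dphi_deriv: "(dphi n has_real_derivative (-(real n * pi)\<^sup>2 * phi n x)) (at x within S)"
  unfolding phi_def dphi_def[abs_def]
  by (auto intro!: derivative_eq_intros simp: power2_eq_square)

lemma deriv_phi: "deriv (phi n) x = dphi n x"
  by (rule DERIV_imp_deriv) (rule phi_deriv)

lemma phi_cont: "continuous_on S (phi n)"
  unfolding phi_def[abs_def] by (intro continuous_intros)

lemma phi_0: "phi n 0 = 0" and phi_1: "phi n 1 = 0"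
  by (auto simp: phi_def)

lemma dphi_1_1: "dphi 1 1 = - sqrt 2 * pi"
  by (simp add: dphi_def)

lemma phi_norm:
  assumes "n \<ge> 1"
  shows "L2norm (phi n) = 1"
proof -
  define a where "a = real n * pi"
  have a: "a > 0" using assms by (simp add: a_def)
  have "((\<lambda>x. (phi n x)\<^sup>2) has_integral ((1 - sin (2*a*1)/(2*a)) - (0 - sin (2*a*0)/(2*a)))) {0..1}"
  proof (rule fundamental_theorem_of_calculus)
    show "0 \<le> (1::real)" by simp
    fix x :: real
    have "((\<lambda>x. x - sin (2*a*x)/(2*a)) has_real_derivative (1 - cos (2*a*x) * (2*a) / (2*a))) (at x within {0..1})"
      by (auto intro!: derivative_eq_intros)
    moreover have "1 - cos (2*a*x) * (2*a) / (2*a) = (phi n x)\<^sup>2"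
    proof -
      have "1 - cos (2*a*x) * (2*a) / (2*a) = 1 - cos (2*(a*x))" using a by (simp add: mult.assoc)
      also have "\<dots> = 2 * (sin (a*x))\<^sup>2" by (simp add: cos_double_sin)
      also have "\<dots> = (phi n x)\<^sup>2" by (simp add: phi_def a_def power_mult_distrib mult.assoc)
      finally show ?thesis .
    qed
    ultimately show "((\<lambda>x. x - sin (2*a*x)/(2*a)) has_vector_derivative (phi n x)\<^sup>2) (at x within {0..1})"
      by (simp add: has_real_derivative_iff_has_vector_derivative)
  qed
  moreover have "sin (2*a) = 0" unfolding a_def
    by (metis mult.assoc of_nat_numeral of_nat_mult sin_npi)
  ultimately have "((\<lambda>x. (phi n x)\<^sup>2) has_integral 1) {0..1}" by simp
  hence "integral {0..1} (\<lambda>x. (phi n x)\<^sup>2) = 1" by (rule integral_unique)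
  moreover have "integral\<^sup>L M01 (\<lambda>x. (phi n x)\<^sup>2) = integral {0..1} (\<lambda>x. (phi n x)\<^sup>2)"
    by (rule lebesgue_integral_eq_integral) (auto intro!: continuous_imp_integrable_real continuous_intros phi_cont)
  ultimately show ?thesis by (simp add: L2norm_def)
qed



lemma Bs_cont_on [continuous_intros]: "continuous_on S f \<Longrightarrow> continuous_on S (\<lambda>x. Bs (f x))"
  by (rule continuous_on_compose2[of UNIV Bs]) (auto intro: continuous_at_imp_continuous_on Bs_cont)

lemma gain_k_formula:
  assumes "theta > 0" "lam + c > 0" "y \<in> {0..1}"
  shows "gain_k theta lam c y = -(y*((lam+c)/theta)/2) * Bs (((lam+c)/theta)*(1-y\<^sup>2)/4)"
  unfolding gain_k_def by (rule kernelK_Bs) (use assms in auto)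

lemma gain_k_cont:
  assumes "theta > 0" "lam + c > 0"
  shows "continuous_on {0..1} (gain_k theta lam c)"
proof -
  have "continuous_on {0..1} (\<lambda>y. -(y*((lam+c)/theta)/2) * Bs (((lam+c)/theta)*(1-y\<^sup>2)/4))"
    by (intro continuous_intros) auto
  thus ?thesis by (rule continuous_on_cong[THEN iffD1, rotated -1]) (auto simp: gain_k_formula assms)
qed

lemma gain_k_neg:
  assumes "theta > 0" "lam + c > 0" "0 < y" "y \<le> 1"
  shows "gain_k theta lam c y < 0"
proof -
  have "y\<^sup>2 \<le> 1\<^sup>2" using assms by (intro power_mono) auto
  hence "((lam+c)/theta)*(1-y\<^sup>2)/4 \<ge> 0" using assms by auto
  hence "Bs (((lam+c)/theta)*(1-y\<^sup>2)/4) > 0" by (rule Bs_pos)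
  moreover have "y*((lam+c)/theta)/2 > 0" using assms by auto
  ultimately show ?thesis using assms by (simp add: gain_k_formula mult_pos_pos)
qed

lemma kn1_neg:
  assumes "theta > 0" "lam + c > 0"
  shows "ip01 (gain_k theta lam c) (phi 1) < 0"
proof -
  have "ip01 (gain_k theta lam c) (phi 1) = integral {0..1} (\<lambda>y. gain_k theta lam c y * phi 1 y)"
    by (rule ip01_cont) (auto intro: gain_k_cont assms phi_cont)
  also have "\<dots> < integral {0..1} (\<lambda>y::real. 0)"
  proof (rule integral_less_real[of 0 1 "\<lambda>y. gain_k theta lam c y * phi 1 y" "\<lambda>y::real. 0"])
    show "continuous_on {0..1} (\<lambda>y. gain_k theta lam c y * phi 1 y)"
      by (intro continuous_intros gain_k_cont assms phi_cont)
    fix y :: real assume y: "y \<in> {0<..<1}"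
    hence "sin (pi * y) > 0" by (intro sin_gt_zero) auto
    hence "phi 1 y > 0" by (simp add: phi_def)
    moreover have "gain_k theta lam c y < 0" using y assms by (intro gain_k_neg) auto
    ultimately show "gain_k theta lam c y * phi 1 y < 0" by (simp add: mult_neg_pos)
  qed auto
  finally show ?thesis by simp
qed

lemma sexp_strict_mono:
  fixes s t :: real assumes "0 \<le> s" "s < t"
  shows "s * exp s < t * exp t"
proof -
  have "s * exp s \<le> s * exp t" using assms by (intro mult_left_mono) auto
  also have "\<dots> < t * exp t" using assms by (intro mult_strict_right_mono) auto
  finally show ?thesis .
qed

lemma lambertW_prop:
  assumes "x \<ge> 0"
  shows "lambertW x \<ge> 0 \<and> lambertW x * exp (lambertW x) = x"
proof -
  have "\<exists>s. 0 \<le> s \<and> s \<le> x \<and> s * exp s = x"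
  proof (rule IVT')
    show "0 * exp 0 \<le> x" using assms by simp
    have "x * 1 \<le> x * exp x" using assms by (intro mult_left_mono) auto
    thus "x \<le> x * exp x" by simp
    show "continuous_on {0..x} (\<lambda>s. s * exp s)" by (intro continuous_intros)
  qed (use assms in auto)
  then obtain s where s: "0 \<le> s" "s * exp s = x" by blast
  have "\<exists>!s. 0 \<le> s \<and> s * exp s = x"
  proof (rule ex1I[of _ s])
    show "0 \<le> s \<and> s * exp s = x" using s by simp
    fix r assume r: "0 \<le> r \<and> r * exp r = x"
    show "r = s"
    proof (rule ccontr)
      assume "r \<noteq> s"
      hence "r < s \<or> s < r" by auto
      thus False using sexp_strict_mono[of r s] sexp_strict_mono[of s r] r s by auto
    qed
  qed
  hence "0 \<le> lambertW x \<and> lambertW x * exp (lambertW x) = x"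
    unfolding lambertW_def by (rule theI')
  thus ?thesis .
qed

lemma exp_minus_one_bound:
  fixes x :: real
  shows "\<bar>exp x - 1\<bar> \<le> \<bar>x\<bar> * exp (max x 0)"
proof (cases "x \<ge> 0")
  case True
  have "1 - x \<le> exp (-x)" using exp_ge_add_one_self[of "-x"] by simp
  hence "exp x * (1 - x) \<le> exp x * exp (-x)" by (intro mult_left_mono) auto
  hence "exp x - x * exp x \<le> 1" by (simp add: exp_minus algebra_simps)
  moreover have "exp x \<ge> 1" using True by simp
  ultimately show ?thesis using True by (simp add: max_def)
next
  case False
  have "1 + x \<le> exp x" by (rule exp_ge_add_one_self)
  moreover have "exp x < 1" using False by simp
  ultimately have "\<bar>exp x - 1\<bar> \<le> \<bar>x\<bar>" using False by linarith
  thus ?thesis using False by (simp add: max_def)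
qed

lemma ode_bound:
  fixes c :: "real \<Rightarrow> real" and t0 t L D :: real
  assumes "t0 < t" and cont: "continuous_on {t0..t} c"
    and der: "\<And>r. t0 < r \<Longrightarrow> r < t \<Longrightarrow> (c has_real_derivative (- L * c r - D)) (at r)"
  shows "\<bar>c t - c t0\<bar> \<le> (\<bar>L\<bar> * \<bar>c t0\<bar> + \<bar>D\<bar>) * ((t - t0) * exp (max (-L) 0 * (t - t0)))"
proof -
  define Psi where "Psi = (\<lambda>s. if L = 0 then s else (exp (L * s) - 1)/L)"
  have dPsi: "(Psi has_real_derivative exp (L * s)) (at s)" for s
  proof (cases "L = 0")
    case True thus ?thesis unfolding Psi_def[abs_def] by (auto intro!: derivative_eq_intros)
  next
    case False
    have "((\<lambda>s. (exp (L * s) - 1)/L) has_real_derivative exp (L * s)) (at s)"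
      using False by (auto intro!: derivative_eq_intros)
    thus ?thesis using False unfolding Psi_def[abs_def] by simp
  qed
  define K where "K = L * c t0 + D"
  define m where "m r = exp (L*(r - t0)) * (c r - c t0) + K * Psi (r - t0)" for r
  have "m t = m t0"
  proof (rule DERIV_isconst_end[OF assms(1)])
    have "continuous_on {t0..t} (\<lambda>r. Psi (r - t0))"
      by (rule continuous_on_compose2[of UNIV Psi]) (auto intro!: continuous_intros continuous_at_imp_continuous_on DERIV_isCont[OF dPsi])
    thus "continuous_on {t0..t} m" unfolding m_def by (intro continuous_intros cont)
    fix r assume r: "t0 < r" "r < t"
    have "(m has_real_derivative
        (L * exp (L*(r-t0)) * (c r - c t0) + exp (L*(r - t0)) * (- L * c r - D) + K * exp (L*(r-t0)))) (at r)"
      unfolding m_def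
      by (rule derivative_eq_intros refl der[OF r] DERIV_chain2[OF dPsi] | simp)+
    moreover have "L * exp (L*(r-t0)) * (c r - c t0) + exp (L*(r - t0)) * (- L * c r - D) + K * exp (L*(r-t0)) = 0"
      unfolding K_def by (simp add: algebra_simps)
    ultimately show "(m has_real_derivative 0) (at r)" by simp
  qed
  moreover have "Psi 0 = 0" by (simp add: Psi_def)
  ultimately have "exp (L*(t - t0)) * (c t - c t0) + K * Psi (t - t0) = 0"
    unfolding m_def by simp
  hence eq: "exp (L*(t - t0)) * (c t - c t0) = - K * Psi (t - t0)" by linarith
  define s where "s = t - t0"
  have s: "s > 0" using assms by (simp add: s_def)
  have e1: "exp (-(L * s)) * exp (L * s) = 1" by (simp add: exp_add[symmetric])
  have ct: "c t - c t0 = - K * (exp (-(L * s)) * Psi s)"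
  proof -
    have "c t - c t0 = (exp (-(L * s)) * exp (L * s)) * (c t - c t0)" by (simp only: e1) simp
    also have "\<dots> = exp (-(L * s)) * (exp (L * s) * (c t - c t0))" by (simp only: mult.assoc)
    also have "exp (L * s) * (c t - c t0) = - K * Psi s" using eq by (simp add: s_def)
    finally show ?thesis by simp
  qed
  have bnd: "\<bar>exp (-(L * s)) * Psi s\<bar> \<le> s * exp (max (-L) 0 * s)"
  proof (cases "L = 0")
    case True thus ?thesis using s by (simp add: Psi_def)
  next
    case False
    have "exp (-(L * s)) * Psi s = (1 - exp (-(L * s))) / L"
      using False by (simp add: Psi_def field_simps exp_minus)
    hence "\<bar>exp (-(L * s)) * Psi s\<bar> = \<bar>exp (-(L * s)) - 1\<bar> / \<bar>L\<bar>"
      by (simp add: abs_minus_commute)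
    also have "\<dots> \<le> (\<bar>-(L * s)\<bar> * exp (max (-(L * s)) 0)) / \<bar>L\<bar>"
      by (intro divide_right_mono exp_minus_one_bound) auto
    also have "max (-(L * s)) 0 = max (-L) 0 * s" using s
      by (cases "L \<ge> 0") (auto simp: max_def mult_nonneg_nonneg mult_neg_pos zero_le_mult_iff)
    also have "(\<bar>-(L * s)\<bar> * exp (max (-L) 0 * s)) / \<bar>L\<bar> = s * exp (max (-L) 0 * s)"
      using False s by (simp add: abs_mult)
    finally show ?thesis .
  qed
  have "\<bar>c t - c t0\<bar> = \<bar>K\<bar> * \<bar>exp (-(L * s)) * Psi s\<bar>" by (simp add: ct abs_mult)
  also have "\<dots> \<le> (\<bar>L\<bar> * \<bar>c t0\<bar> + \<bar>D\<bar>) * (s * exp (max (-L) 0 * s))"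
  proof (rule mult_mono[OF _ bnd])
    show "\<bar>K\<bar> \<le> \<bar>L\<bar> * \<bar>c t0\<bar> + \<bar>D\<bar>" unfolding K_def by (simp add: abs_triangle_ineq[THEN order_trans] abs_mult)
  qed auto
  finally show ?thesis by (simp add: s_def)
qed



lemma ip01_diff2:
  assumes "L2 f" "L2 g" "L2 h"
  shows "ip01 f (\<lambda>x. g x - h x) = ip01 f g - ip01 f h"
proof -
  have "ip01 f g - ip01 f h = integral\<^sup>L M01 (\<lambda>x. f x * g x - f x * h x)"
    unfolding ip01_def
    by (rule Bochner_Integration.integral_diff[symmetric]) (auto intro: L2_prod_integrable assms)
  thus ?thesis unfolding ip01_def by (simp add: right_diff_distrib)
qed

lemma ip01_diff1:
  assumes "L2 f" "L2 g" "L2 h"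
  shows "ip01 (\<lambda>x. f x - g x) h = ip01 f h - ip01 g h"
proof -
  have "ip01 f h - ip01 g h = integral\<^sup>L M01 (\<lambda>x. f x * h x - g x * h x)"
    unfolding ip01_def
    by (rule Bochner_Integration.integral_diff[symmetric]) (auto intro: L2_prod_integrable assms)
  thus ?thesis unfolding ip01_def by (simp add: left_diff_distrib)
qed

lemma ip01_sum1:
  assumes "finite A" "\<And>n. n \<in> A \<Longrightarrow> L2 (f n)" "L2 h"
  shows "ip01 (\<lambda>y. \<Sum>n\<in>A. a n * f n y) h = (\<Sum>n\<in>A. a n * ip01 (f n) h)"
proof -
  have "ip01 (\<lambda>y. \<Sum>n\<in>A. a n * f n y) h = integral\<^sup>L M01 (\<lambda>x. \<Sum>n\<in>A. a n * (f n x * h x))"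
    unfolding ip01_def by (simp add: sum_distrib_right mult.assoc)
  also have "\<dots> = (\<Sum>n\<in>A. integral\<^sup>L M01 (\<lambda>x. a n * (f n x * h x)))"
    by (rule Bochner_Integration.integral_sum) (auto intro!: L2_prod_integrable assms)
  also have "\<dots> = (\<Sum>n\<in>A. a n * ip01 (f n) h)"
    unfolding ip01_def by simp
  finally show ?thesis .
qed

lemma coeff_cont:
  assumes hs: "heat_solution theta lam t0 U w"
  shows "continuous_on {t0..t1} (\<lambda>r. ip01 (phi n) (w r))"
  unfolding continuous_on_def
proof
  fix s assume s: "s \<in> {t0..t1}"
  have L2w: "\<And>r. r \<ge> t0 \<Longrightarrow> L2 (w r)" using hs unfolding heat_solution_def by auto
  have lim: "((\<lambda>r. L2norm (\<lambda>x. w r x - w s x)) \<longlongrightarrow> 0) (at s within {t0..})"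
    using hs s unfolding heat_solution_def by auto
  have Lphi: "L2 (phi n)" by (rule L2_cont[OF phi_cont])
  have "((\<lambda>r. ip01 (phi n) (w r) - ip01 (phi n) (w s)) \<longlongrightarrow> 0) (at s within {t0..})"
  proof (rule Lim_null_comparison)
    show "((\<lambda>r. L2norm (phi n) * L2norm (\<lambda>x. w r x - w s x)) \<longlongrightarrow> 0) (at s within {t0..})"
      using tendsto_mult_right_zero[OF lim] by simp
    show "\<forall>\<^sub>F r in at s within {t0..}. norm (ip01 (phi n) (w r) - ip01 (phi n) (w s)) \<le> L2norm (phi n) * L2norm (\<lambda>x. w r x - w s x)"
      unfolding eventually_at_filter
    proof (intro always_eventually allI impI)
      fix r assume r: "r \<in> {t0..}"
      have "ip01 (phi n) (w r) - ip01 (phi n) (w s) = ip01 (phi n) (\<lambda>x. w r x - w s x)"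
        using r s by (intro ip01_diff2[symmetric] Lphi L2w) auto
      also have "\<bar>\<dots>\<bar> \<le> L2norm (phi n) * L2norm (\<lambda>x. w r x - w s x)"
        using r s by (intro L2_CS Lphi L2_diff L2w) auto
      finally show "norm (ip01 (phi n) (w r) - ip01 (phi n) (w s)) \<le> L2norm (phi n) * L2norm (\<lambda>x. w r x - w s x)"
        by simp
    qed
  qed
  hence "((\<lambda>r. (ip01 (phi n) (w r) - ip01 (phi n) (w s)) + ip01 (phi n) (w s)) \<longlongrightarrow> 0 + ip01 (phi n) (w s)) (at s within {t0..})"
    by (intro tendsto_add tendsto_const)
  hence "((\<lambda>r. ip01 (phi n) (w r)) \<longlongrightarrow> ip01 (phi n) (w s)) (at s within {t0..})" by simp
  thus "((\<lambda>r. ip01 (phi n) (w r)) \<longlongrightarrow> ip01 (phi n) (w s)) (at s within {t0..t1})"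
    by (rule tendsto_within_subset) auto
qed


lemma coeff_deriv:
  assumes hs: "heat_solution theta lam t0 U w" and t: "t > t0"
  shows "((\<lambda>r. ip01 (phi n) (w r)) has_real_derivative
           (- ((real n)\<^sup>2 * pi\<^sup>2 * theta - lam) * ip01 (phi n) (w t) - theta * dphi n 1 * U)) (at t)"
proof -
  obtain wt wx wxx :: "real \<Rightarrow> real \<Rightarrow> real" where
    cwt: "continuous_on ({t0<..} \<times> {0..1}) (\<lambda>(t, x). wt t x)" and
    dwt: "\<forall>t>t0. \<forall>x\<in>{0..1}. ((\<lambda>s. w s x) has_real_derivative wt t x) (at t)" and
    dwx: "\<forall>t>t0. \<forall>x\<in>{0..1}. ((\<lambda>y. w t y) has_real_derivative wx t x) (at x within {0..1})" and
    dwxx: "\<forall>t>t0. \<forall>x\<in>{0..1}. ((\<lambda>y. wx t y) has_real_derivative wxx t x) (at x within {0..1})" and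
    cwxx: "\<forall>t>t0. continuous_on {0..1} (wxx t)" and
    pde: "\<forall>t>t0. \<forall>x\<in>{0<..<1}. wt t x = theta * wxx t x + lam * w t x" and
    bc: "\<forall>t>t0. w t 0 = 0 \<and> w t 1 = U"
    using hs unfolding heat_solution_def by blast
  have cw: "continuous_on {0..1} (w r)" if "r > t0" for r
    by (rule DERIV_continuous_on[of _ _ "wx r"]) (use dwx that in auto)
  have cwx: "continuous_on {0..1} (wx r)" if "r > t0" for r
    by (rule DERIV_continuous_on[of _ _ "wxx r"]) (use dwxx that in auto)
  have cphiw: "continuous_on {0..1} (\<lambda>x. phi n x * w r x)" if "r > t0" for r
    by (intro continuous_intros phi_cont cw that)
  define I where "I r = integral {0..1} (\<lambda>x. phi n x * w r x)" for r
  have cI: "ip01 (phi n) (w r) = I r" if "r \<in> {t0<..}" for r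
    unfolding I_def by (rule ip01_cont) (use that in \<open>auto intro: phi_cont cw\<close>)
  have cwt': "continuous_on ({t0<..} \<times> cbox 0 1) (\<lambda>(r, x). phi n x * wt r x)"
  proof -
    have c1: "continuous_on ({t0<..} \<times> {0..1}) (\<lambda>p. phi n (snd p))"
      by (rule continuous_on_compose2[OF phi_cont[of UNIV] continuous_on_snd[OF continuous_on_id]]) (rule subset_UNIV)
    have c2: "continuous_on ({t0<..} \<times> {0..1}) (\<lambda>p. wt (fst p) (snd p))"
      using cwt by (simp add: case_prod_beta)
    have "continuous_on ({t0<..} \<times> {0..1}) (\<lambda>p. phi n (snd p) * wt (fst p) (snd p))"
      by (rule continuous_on_mult[OF c1 c2])
    thus ?thesis by (simp add: case_prod_beta)
  qed
  have L: "((\<lambda>r. integral (cbox 0 1) (\<lambda>x. phi n x * w r x)) has_field_derivative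
          integral (cbox 0 1) (\<lambda>x. phi n x * wt t x)) (at t within {t0<..})"
  proof (rule leibniz_rule_field_derivative[where fx = "\<lambda>r x. phi n x * wt r x"])
    fix r x assume rx: "r \<in> {t0<..}" "x \<in> cbox (0::real) 1"
    have "((\<lambda>s. w s x) has_real_derivative wt r x) (at r)" using dwt rx by simp
    hence "((\<lambda>r. phi n x * w r x) has_field_derivative phi n x * wt r x) (at r)"
      by (rule DERIV_cmult)
    thus "((\<lambda>r. phi n x * w r x) has_field_derivative phi n x * wt r x) (at r within {t0<..})"
      by (rule has_field_derivative_at_within)
  next
    fix r :: real assume "r \<in> {t0<..}"
    hence "(\<lambda>x. phi n x * w r x) integrable_on {0..1}"
      using integrable_continuous_interval[OF cphiw[of r]] by simp
    thus "(\<lambda>x. phi n x * w r x) integrable_on cbox 0 1" by simp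
  next
    show "continuous_on ({t0<..} \<times> cbox 0 1) (\<lambda>(r, x). phi n x * wt r x)" by (rule cwt')
    show "t \<in> {t0<..}" using t by simp
    show "convex {t0<..}" by (rule convex_real_interval)
  qed
  have at: "at t within {t0<..} = at t" by (rule at_within_open) (use t in auto)
  have cb: "cbox 0 1 = {0..1::real}" by simp
  have dI: "(I has_field_derivative integral {0..1} (\<lambda>x. phi n x * wt t x)) (at t)"
    using L unfolding at cb I_def[symmetric] .
  have "integral {0..1} (\<lambda>x. phi n x * wt t x) = integral {0..1} (\<lambda>x. phi n x * (theta * wxx t x + lam * w t x))"
  proof (rule integral_spike[of "{0,1}"])
    fix x assume "x \<in> {0..1::real} - {0, 1}"
    thus "phi n x * (theta * wxx t x + lam * w t x) = phi n x * wt t x"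
      using pde t by auto
  qed auto
  \<comment> \<open>integration by parts\<close>
  define F where "F x = phi n x * wx t x - dphi n x * w t x" for x
  have "((\<lambda>x. phi n x * wxx t x + (real n * pi)\<^sup>2 * (phi n x * w t x)) has_integral F 1 - F 0) {0..1}"
  proof (rule fundamental_theorem_of_calculus)
    fix x :: real assume x: "x \<in> {0..1}"
    have "(F has_real_derivative
           (dphi n x * wx t x + wxx t x * phi n x) - (-(real n * pi)\<^sup>2 * phi n x * w t x + wx t x * dphi n x))
           (at x within {0..1})"
      unfolding F_def[abs_def]
      by (intro DERIV_diff DERIV_mult phi_deriv dphi_deriv) (use dwx dwxx x t in auto)
    thus "(F has_vector_derivative phi n x * wxx t x + (real n * pi)\<^sup>2 * (phi n x * w t x)) (at x within {0..1})"
      by (simp add: has_real_derivative_iff_has_vector_derivative[symmetric] algebra_simps)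
  qed auto
  moreover have "F 1 = - dphi n 1 * U" "F 0 = 0" using bc t by (auto simp: F_def phi_0 phi_1)
  ultimately have h1: "((\<lambda>x. phi n x * wxx t x + (real n * pi)\<^sup>2 * (phi n x * w t x)) has_integral - dphi n 1 * U) {0..1}"
    by simp
  have h2: "((\<lambda>x. phi n x * w t x) has_integral I t) {0..1}"
    unfolding I_def using integrable_continuous_interval[OF cphiw[OF t]] by (rule integrable_integral)
  have h3: "((\<lambda>x. phi n x * wxx t x) has_integral - dphi n 1 * U - (real n * pi)\<^sup>2 * I t) {0..1}"
    using has_integral_diff[OF h1 has_integral_cmul[OF h2, of "(real n * pi)\<^sup>2"]] by simp
  have "((\<lambda>x. phi n x * (theta * wxx t x + lam * w t x)) has_integral
          theta * (- dphi n 1 * U - (real n * pi)\<^sup>2 * I t) + lam * I t) {0..1}"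
    using has_integral_add[OF has_integral_cmul[OF h3, of theta] has_integral_cmul[OF h2, of lam]]
    by (simp add: algebra_simps)
  hence "integral {0..1} (\<lambda>x. phi n x * wt t x) = theta * (- dphi n 1 * U - (real n * pi)\<^sup>2 * I t) + lam * I t"
    using \<open>integral {0..1} (\<lambda>x. phi n x * wt t x) = _\<close> by (simp add: integral_unique)
  also have "\<dots> = - ((real n)\<^sup>2 * pi\<^sup>2 * theta - lam) * I t - theta * dphi n 1 * U"
    by (simp add: power_mult_distrib algebra_simps)
  finally have dI': "(I has_real_derivative - ((real n)\<^sup>2 * pi\<^sup>2 * theta - lam) * I t - theta * dphi n 1 * U) (at t)"
    using dI by simp
  have "((\<lambda>r. ip01 (phi n) (w r)) has_real_derivative - ((real n)\<^sup>2 * pi\<^sup>2 * theta - lam) * I t - theta * dphi n 1 * U) (at t)"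
    by (rule has_field_derivative_transform_within_open[OF dI', of "{t0<..}"]) (use t cI in auto)
  thus ?thesis using cI[of t] t by simp
qed



theorem mainTheorem4:
  fixes theta lam c beta :: real and N :: nat
  defines "k \<equiv> gain_k theta lam c"
  defines "kn \<equiv> (\<lambda>n. ip01 k (phi n))"
  defines "g \<equiv> (\<lambda>y. \<Sum>n=1..N. kn n * phi n y)"
  defines "lamn \<equiv> (\<lambda>n::nat. (real n)\<^sup>2 * pi\<^sup>2 * theta - lam)"
  defines "FN \<equiv> (\<Sum>n=1..N. \<bar>kn n * deriv (phi n) 1\<bar>)"
  defines "GN \<equiv> (\<Sum>n=1..N. \<bar>kn n * lamn n\<bar>)"
  defines "p \<equiv> - 2 * theta * pi\<^sup>2 + 2 * lam + lam\<^sup>2 / 3"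
  defines "a0 \<equiv> beta * L2norm k - L2norm (\<lambda>y. k y - g y)"
  defines "a1 \<equiv> theta * L2norm k * FN + sqrt 3 / 3 * GN * L2norm k"
  defines "a2 \<equiv> GN * (1 + sqrt 3 / 3 * L2norm k + L2norm k / sqrt p)"
  defines "tau \<equiv> 2 / p * lambertW (p * a0 / (2 * (a1 + a2)))"
  assumes "theta > 0" and "lam \<ge> theta * pi\<^sup>2" and "c \<ge> 0" and "beta > 0" and "N \<ge> 1"
    and "L2norm (\<lambda>y. k y - g y) < beta * L2norm k"
  shows "tau > 0 \<and>
    (\<forall>u0 u ts j. L2 u0 \<and> event_triggered theta lam c beta u0 u ts \<and> ts (Suc j) < \<infinity>
        \<longrightarrow> ts (Suc j) - ts j \<ge> ereal tau)"
proof -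
  have th: "theta > 0" and lamth: "lam \<ge> theta * pi\<^sup>2" and c0: "c \<ge> 0" and be: "beta > 0"
    and N1: "N \<ge> 1" and kg: "L2norm (\<lambda>y. k y - g y) < beta * L2norm k" using assms by auto
  have thpi: "theta * pi\<^sup>2 > 0" using th by simp
  have lampos: "lam > 0" using lamth thpi by linarith
  have lc: "lam + c > 0" using lampos c0 by linarith
  have p_pos: "p > 0"
  proof -
    have "lam\<^sup>2 / 3 > 0" using lampos by simp
    thus ?thesis unfolding p_def using lamth by linarith
  qed
  have kcont: "continuous_on {0..1} k" unfolding k_def by (rule gain_k_cont[OF th lc])
  have Lk: "L2 k" by (rule L2_cont[OF kcont])
  have Lphi: "L2 (phi n)" for n by (rule L2_cont[OF phi_cont])
  have gcont: "continuous_on {0..1} g" unfolding g_def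
    by (intro continuous_intros phi_cont)
  have Lg: "L2 g" by (rule L2_cont[OF gcont])
  have Lkg: "L2 (\<lambda>y. k y - g y)" by (rule L2_diff[OF Lk Lg])
  have nkg0: "L2norm (\<lambda>y. k y - g y) \<ge> 0" unfolding L2norm_def by simp
  have nk0: "L2norm k \<ge> 0" unfolding L2norm_def by simp
  have nkpos: "L2norm k > 0"
  proof (rule ccontr)
    assume "\<not> L2norm k > 0"
    hence "L2norm k = 0" using nk0 by simp
    thus False using kg nkg0 by simp
  qed
  have a0pos: "a0 > 0" unfolding a0_def using kg by simp
  have dphi_eq: "deriv (phi n) 1 = dphi n 1" for n by (rule deriv_phi)
  have FN_eq: "FN = (\<Sum>n=1..N. \<bar>kn n\<bar> * \<bar>dphi n 1\<bar>)"
    unfolding FN_def dphi_eq by (simp add: abs_mult)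
  have GN_eq: "GN = (\<Sum>n=1..N. \<bar>kn n\<bar> * \<bar>lamn n\<bar>)"
    unfolding GN_def by (simp add: abs_mult)
  have GN0: "GN \<ge> 0" unfolding GN_def by (rule sum_nonneg) simp
  have FNpos: "FN > 0"
  proof -
    have "kn 1 < 0" unfolding kn_def k_def by (rule kn1_neg[OF th lc])
    moreover have "dphi 1 1 \<noteq> 0" unfolding dphi_1_1 by simp
    ultimately have "0 < \<bar>kn 1\<bar> * \<bar>dphi 1 1\<bar>" by (intro mult_pos_pos) auto
    also have "\<dots> \<le> (\<Sum>n=1..N. \<bar>kn n\<bar> * \<bar>dphi n 1\<bar>)"
      by (rule member_le_sum[where f = "\<lambda>n. \<bar>kn n\<bar> * \<bar>dphi n 1\<bar>"]) (use N1 in auto)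
    finally show ?thesis unfolding FN_eq .
  qed
  have sq3: "sqrt 3 / 3 * GN * L2norm k \<ge> 0" using GN0 nk0 by simp
  have a1pos: "a1 > 0" unfolding a1_def using th nkpos FNpos sq3
    by (simp add: add_pos_nonneg)
  have GN_a2: "GN \<le> a2"
  proof -
    have "0 \<le> sqrt 3 / 3 * L2norm k + L2norm k / sqrt p" using nk0 p_pos by simp
    hence "GN * 1 \<le> GN * (1 + sqrt 3 / 3 * L2norm k + L2norm k / sqrt p)"
      using GN0 by (intro mult_left_mono) auto
    thus ?thesis unfolding a2_def by simp
  qed
  have a12pos: "a1 + a2 > 0" using a1pos GN_a2 GN0 by linarith
  have B_le: "GN + theta * L2norm k * FN \<le> a1 + a2"
    using GN_a2 sq3 unfolding a1_def by linarith
  define x where "x = p * a0 / (2 * (a1 + a2))"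
  have xpos: "x > 0" unfolding x_def using p_pos a0pos a12pos by simp
  define W where "W = lambertW x"
  have W: "W \<ge> 0" "W * exp W = x" using lambertW_prop[of x] xpos by (auto simp: W_def)
  have Wpos: "W > 0"
  proof (rule ccontr)
    assume "\<not> W > 0" hence "W = 0" using W by simp
    thus False using W xpos by simp
  qed
  have tau_eq: "tau = 2 / p * W" unfolding tau_def W_def x_def ..
  have taupos: "tau > 0" unfolding tau_eq using p_pos Wpos by simp
  have ptau: "p * tau / 2 = W" unfolding tau_eq using p_pos by simp
  have key: "tau * exp (p * tau / 2) = a0 / (a1 + a2)"
  proof -
    have "tau * exp (p * tau / 2) = 2 / p * (W * exp W)" unfolding ptau by (simp add: tau_eq)
    also have "\<dots> = a0 / (a1 + a2)" unfolding W(2) x_def using p_pos a12pos by (simp add: field_simps)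
    finally show ?thesis .
  qed
  have mono: "s * exp (p * s / 2) \<le> tau * exp (p * tau / 2)" if "0 \<le> s" "s \<le> tau" for s
  proof (rule mult_mono)
    show "exp (p * s / 2) \<le> exp (p * tau / 2)" using that p_pos by (simp add: mult_left_mono divide_right_mono)
  qed (use that in auto)
  show ?thesis
  proof (intro conjI allI impI taupos)
    fix u0 u ts j
    assume H: "L2 u0 \<and> event_triggered theta lam c beta u0 u ts \<and> ts (Suc j) < \<infinity>"
    have ET: "event_triggered theta lam c beta u0 u ts" and fin: "ts (Suc j) < \<infinity>" using H by auto
    note ETd = ET[unfolded event_triggered_def k_def[symmetric]]
    have ts0: "ts 0 = 0" and tsinf: "\<And>i. ts i = \<infinity> \<Longrightarrow> ts (Suc i) = \<infinity>"
      and tsstep: "\<And>i. ts i \<noteq> \<infinity> \<Longrightarrow> (\<exists>w. heat_solution theta lam (real_of_ereal (ts i))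
                 (ip01 k (u (real_of_ereal (ts i)))) w \<and>
             (\<forall>x\<in>{0..1}. w (real_of_ereal (ts i)) x = u (real_of_ereal (ts i)) x) \<and>
             (let tj = real_of_ereal (ts i); k = k;
                  S = {t. tj < t \<and>
                        \<bar>ip01 k (\<lambda>y. w tj y - w t y)\<bar>
                          > beta * L2norm k * L2norm (w t) + beta * L2norm k * L2norm (w tj)}
              in (S = {} \<longrightarrow> ts (Suc i) = \<infinity>) \<and> (S \<noteq> {} \<longrightarrow> ts (Suc i) = ereal (Inf S))) \<and>
             (\<forall>t. ts i \<le> ereal t \<and> ereal t \<le> ts (Suc i) \<longrightarrow> (\<forall>x\<in>{0..1}. u t x = w t x)))"
      using ETd by auto
    have nminf: "ts i \<noteq> -\<infinity>" for i
    proof (induction i)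
      case 0 thus ?case using ts0 by simp
    next
      case (Suc i)
      show ?case
      proof (cases "ts i = \<infinity>")
        case True thus ?thesis using tsinf by simp
      next
        case False
        then obtain w where "(let tj = real_of_ereal (ts i); k = k;
                  S = {t. tj < t \<and>
                        \<bar>ip01 k (\<lambda>y. w tj y - w t y)\<bar>
                          > beta * L2norm k * L2norm (w t) + beta * L2norm k * L2norm (w tj)}
              in (S = {} \<longrightarrow> ts (Suc i) = \<infinity>) \<and> (S \<noteq> {} \<longrightarrow> ts (Suc i) = ereal (Inf S)))"
          using tsstep by blast
        thus ?thesis unfolding Let_def by (cases "ts (Suc i) = \<infinity>") auto
      qed
    qed
    have ninf: "ts j \<noteq> \<infinity>" using fin tsinf by auto
    define tj where "tj = real_of_ereal (ts j)"
    have tsj: "ts j = ereal tj" unfolding tj_def using ninf nminf[of j] by (cases "ts j") auto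
    define U where "U = ip01 k (u tj)"
    obtain w where hs: "heat_solution theta lam tj U w"
      and agree: "\<forall>x\<in>{0..1}. w tj x = u tj x"
      and Sprop: "(let tj = tj; k = k;
                  S = {t. tj < t \<and>
                        \<bar>ip01 k (\<lambda>y. w tj y - w t y)\<bar>
                          > beta * L2norm k * L2norm (w t) + beta * L2norm k * L2norm (w tj)}
              in (S = {} \<longrightarrow> ts (Suc j) = \<infinity>) \<and> (S \<noteq> {} \<longrightarrow> ts (Suc j) = ereal (Inf S)))"
      using tsstep[OF ninf] unfolding tj_def[symmetric] U_def[symmetric] by blast
    define S where "S = {t. tj < t \<and>
                        \<bar>ip01 k (\<lambda>y. w tj y - w t y)\<bar>
                          > beta * L2norm k * L2norm (w t) + beta * L2norm k * L2norm (w tj)}"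
    have S1: "S = {} \<Longrightarrow> ts (Suc j) = \<infinity>" and S2: "S \<noteq> {} \<Longrightarrow> ts (Suc j) = ereal (Inf S)"
      using Sprop unfolding Let_def S_def[symmetric] by auto
    have Sne: "S \<noteq> {}" using S1 fin by auto
    have Lw: "L2 (w r)" if "r \<ge> tj" for r using hs that unfolding heat_solution_def by auto
    have Ueq: "U = ip01 k (w tj)" unfolding U_def by (rule ip01_cong) (use agree in auto)
    have Ubd: "\<bar>U\<bar> \<le> L2norm k * L2norm (w tj)" unfolding Ueq by (rule L2_CS[OF Lk Lw]) simp
    have claim: "tau < t - tj" if tS: "t \<in> S" for t
    proof -
      have ttj: "tj < t" and trig: "\<bar>ip01 k (\<lambda>y. w tj y - w t y)\<bar>
                          > beta * L2norm k * L2norm (w t) + beta * L2norm k * L2norm (w tj)"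
        using tS unfolding S_def by auto
      define s where "s = t - tj"
      have spos: "s > 0" using ttj by (simp add: s_def)
      define X where "X = s * exp (p * s / 2)"
      have X0: "X \<ge> 0" using spos by (simp add: X_def)
      define A where "A = L2norm (w tj)"
      define B where "B = L2norm (w t)"
      define E where "E = L2norm (\<lambda>y. k y - g y)"
      define Kn where "Kn = L2norm k"
      have A0: "A \<ge> 0" and B0: "B \<ge> 0" unfolding A_def B_def L2norm_def by auto
      define cf where "cf n r = ip01 (phi n) (w r)" for n r
      have cbnd: "\<bar>cf n t - cf n tj\<bar> \<le> (\<bar>lamn n\<bar> + theta * \<bar>dphi n 1\<bar> * Kn) * A * X"
        if n: "n \<in> {1..N}" for n
      proof -
        have "\<bar>cf n t - cf n tj\<bar> \<le> (\<bar>lamn n\<bar> * \<bar>cf n tj\<bar> + \<bar>theta * dphi n 1 * U\<bar>) * ((t - tj) * exp (max (- lamn n) 0 * (t - tj)))"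
        proof (rule ode_bound[OF ttj])
          show "continuous_on {tj..t} (cf n)" unfolding cf_def[abs_def] by (rule coeff_cont[OF hs])
          fix r assume r: "tj < r" "r < t"
          show "(cf n has_real_derivative - lamn n * cf n r - theta * dphi n 1 * U) (at r)"
            unfolding cf_def[abs_def] lamn_def by (rule coeff_deriv[OF hs r(1)])
        qed
        also have "\<dots> \<le> (\<bar>lamn n\<bar> * A + theta * \<bar>dphi n 1\<bar> * (Kn * A)) * X"
        proof (rule mult_mono)
          have "\<bar>cf n tj\<bar> \<le> L2norm (phi n) * L2norm (w tj)" unfolding cf_def by (rule L2_CS[OF Lphi Lw]) simp
          also have "L2norm (phi n) = 1" using n by (intro phi_norm) auto
          finally have c1: "\<bar>cf n tj\<bar> \<le> A" by (simp add: A_def)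
          have c2: "\<bar>theta * dphi n 1 * U\<bar> \<le> theta * \<bar>dphi n 1\<bar> * (Kn * A)"
            using Ubd th unfolding Kn_def A_def by (simp add: abs_mult mult_left_mono)
          show "\<bar>lamn n\<bar> * \<bar>cf n tj\<bar> + \<bar>theta * dphi n 1 * U\<bar> \<le> \<bar>lamn n\<bar> * A + theta * \<bar>dphi n 1\<bar> * (Kn * A)"
            using c1 c2 by (intro add_mono mult_left_mono) auto
          have m: "max (- lamn n) 0 \<le> p / 2"
          proof -
            have "real n \<ge> 1" using n by simp
            hence "(real n)\<^sup>2 \<ge> 1" by simp
            hence "(real n)\<^sup>2 * (pi\<^sup>2 * theta) \<ge> 1 * (pi\<^sup>2 * theta)"
              using th by (intro mult_right_mono) auto
            hence "- lamn n \<le> lam - theta * pi\<^sup>2" unfolding lamn_def by (simp add: algebra_simps)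
            moreover have "lam - theta * pi\<^sup>2 \<le> p / 2" unfolding p_def using lampos by simp
            ultimately show ?thesis using p_pos by simp
          qed
          have "max (- lamn n) 0 * s \<le> p / 2 * s"
            using m spos by (intro mult_right_mono) auto
          hence "exp (max (- lamn n) 0 * s) \<le> exp (p * s / 2)" by simp
          hence "s * exp (max (- lamn n) 0 * s) \<le> X"
            unfolding X_def using spos by (intro mult_left_mono) auto
          thus "(t - tj) * exp (max (- lamn n) 0 * (t - tj)) \<le> X" by (simp add: s_def)
        qed (use A0 Kn_def nk0 th X0 ttj in auto)
        also have "\<dots> = (\<bar>lamn n\<bar> + theta * \<bar>dphi n 1\<bar> * Kn) * A * X" by (simp add: algebra_simps)
        finally show ?thesis .
      qed
      have Lwt: "L2 (w t)" and Lwj: "L2 (w tj)" using ttj by (auto intro: Lw)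
      have ipk: "ip01 k f = ip01 (\<lambda>y. k y - g y) f + (\<Sum>n=1..N. kn n * ip01 (phi n) f)" if f: "L2 f" for f
      proof -
        have "ip01 (\<lambda>y. k y - g y) f = ip01 k f - ip01 g f" by (rule ip01_diff1[OF Lk Lg f])
        moreover have "ip01 g f = (\<Sum>n=1..N. kn n * ip01 (phi n) f)"
          unfolding g_def by (rule ip01_sum1) (auto intro: Lphi f)
        ultimately show ?thesis by simp
      qed
      have deq: "ip01 k (\<lambda>y. w tj y - w t y) =
          ip01 (\<lambda>y. k y - g y) (w tj) - ip01 (\<lambda>y. k y - g y) (w t) + (\<Sum>n=1..N. kn n * (cf n tj - cf n t))"
      proof -
        have "ip01 k (\<lambda>y. w tj y - w t y) = ip01 k (w tj) - ip01 k (w t)" by (rule ip01_diff2[OF Lk Lwj Lwt])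
        also have "\<dots> = ip01 (\<lambda>y. k y - g y) (w tj) - ip01 (\<lambda>y. k y - g y) (w t)
            + ((\<Sum>n=1..N. kn n * cf n tj) - (\<Sum>n=1..N. kn n * cf n t))"
          unfolding ipk[OF Lwj] ipk[OF Lwt] cf_def by simp
        also have "(\<Sum>n=1..N. kn n * cf n tj) - (\<Sum>n=1..N. kn n * cf n t) = (\<Sum>n=1..N. kn n * (cf n tj - cf n t))"
          by (simp add: sum_subtractf right_diff_distrib)
        finally show ?thesis .
      qed
      have e1: "\<bar>ip01 (\<lambda>y. k y - g y) (w tj)\<bar> \<le> E * A" unfolding E_def A_def by (rule L2_CS[OF Lkg Lwj])
      have e2: "\<bar>ip01 (\<lambda>y. k y - g y) (w t)\<bar> \<le> E * B" unfolding E_def B_def by (rule L2_CS[OF Lkg Lwt])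
      have e3: "\<bar>\<Sum>n=1..N. kn n * (cf n tj - cf n t)\<bar> \<le> (GN + theta * Kn * FN) * A * X"
      proof -
        have "\<bar>\<Sum>n=1..N. kn n * (cf n tj - cf n t)\<bar> \<le> (\<Sum>n=1..N. \<bar>kn n * (cf n tj - cf n t)\<bar>)"
          by (rule sum_abs)
        also have "\<dots> \<le> (\<Sum>n=1..N. \<bar>kn n\<bar> * ((\<bar>lamn n\<bar> + theta * \<bar>dphi n 1\<bar> * Kn) * A * X))"
        proof (rule sum_mono)
          fix n assume n: "n \<in> {1..N}"
          have "\<bar>cf n tj - cf n t\<bar> \<le> (\<bar>lamn n\<bar> + theta * \<bar>dphi n 1\<bar> * Kn) * A * X"
            using cbnd[OF n] by (simp add: abs_minus_commute)
          thus "\<bar>kn n * (cf n tj - cf n t)\<bar> \<le> \<bar>kn n\<bar> * ((\<bar>lamn n\<bar> + theta * \<bar>dphi n 1\<bar> * Kn) * A * X)"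
            by (simp add: abs_mult mult_left_mono)
        qed
        also have "\<dots> = ((\<Sum>n=1..N. \<bar>kn n\<bar> * \<bar>lamn n\<bar>) + theta * Kn * (\<Sum>n=1..N. \<bar>kn n\<bar> * \<bar>dphi n 1\<bar>)) * A * X"
          by (simp add: sum_distrib_left sum_distrib_right sum.distrib algebra_simps)
        also have "\<dots> = (GN + theta * Kn * FN) * A * X" unfolding GN_eq FN_eq ..
        finally show ?thesis .
      qed
      have dbnd: "\<bar>ip01 k (\<lambda>y. w tj y - w t y)\<bar> \<le> E * A + E * B + (GN + theta * Kn * FN) * A * X"
        unfolding deq using e1 e2 e3 by linarith
      have trig': "beta * Kn * B + beta * Kn * A < E * A + E * B + (GN + theta * Kn * FN) * A * X"
        using trig dbnd unfolding Kn_def A_def B_def by linarith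
      have a0E: "a0 = beta * Kn - E" unfolding a0_def Kn_def E_def ..
      have "a0 * A + a0 * B < (GN + theta * Kn * FN) * A * X"
        using trig' unfolding a0E by (simp add: algebra_simps)
      moreover have "a0 * B \<ge> 0" using a0pos B0 by simp
      moreover have "(GN + theta * Kn * FN) * A * X \<le> (a1 + a2) * A * X"
        using B_le A0 X0 unfolding Kn_def by (intro mult_right_mono) auto
      ultimately have lt: "a0 * A < (a1 + a2) * A * X" by linarith
      have Apos: "A > 0"
      proof (rule ccontr)
        assume "\<not> A > 0" hence "A = 0" using A0 by simp
        thus False using lt by simp
      qed
      have "a0 < (a1 + a2) * X" using lt Apos by (simp add: mult.commute mult.left_commute)
      hence "a0 / (a1 + a2) < X" using a12pos by (simp add: divide_less_eq mult.commute)
      hence "tau * exp (p * tau / 2) < s * exp (p * s / 2)" unfolding key X_def .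
      thus "tau < t - tj" using mono[of s] spos unfolding s_def by (cases "t - tj \<le> tau") auto
    qed
    have "tj + tau \<le> Inf S"
      by (rule cInf_greatest[OF Sne]) (use claim in force)
    hence "ereal tau \<le> ereal (Inf S) - ereal tj" by simp
    thus "ts (Suc j) - ts j \<ge> ereal tau" using S2[OF Sne] tsj by simp
  qed
qed


end
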